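(* Let $f\colon X\to X$ be a piecewise $\lambda$-contraction. If $\mathscr{C}=\{C_j\}_{j\in\Lambda}$ is a strongly invariant collection of pairwise disjoint open subsets of $X$, then there exist periodic orbits $\gamma_1,\dots,\gamma_r$ of $f$ contained in $\bigcup_{j\in\Lambda}C_j$ such that $\omega(f,y)\in\{\gamma_1,\dots,\gamma_r\}$ for every $y\in\bigcup_{j\in\Lambda}C_j$.
   Context: $(X,d)$ is a compact metric space whose open balls are connected, with $\mathrm{diam}(X)>0$, and $\lambda\in(0,1)$. A piecewise $\lambda$-contraction $f$: there exist $N\in\mathbb{N}$, open connected pairwise disjoint $A_1,\dots,A_N\subset X$ with dense union, and bi-Lipschitz $\varphi_i\colon X\to X$ with Lipschitz constant $\le\lambda$, $f|_{A_i}=\varphi_i|_{A_i}$. A collection $\mathscr{C}=\{C_j\}_{j\in\Lambda}$ of finitely many pairwise disjoint subsets of $X$ is strongly invariant if there is $n_0\ge1$ such that: (i) for each $A\in\mathscr{C}$ there is $A'\in\mathscr{C}$ with $f(A)\subset A'$; (ii) for each $B\in\mathscr{C}$ and $n\ge n_0$ there is $B'\in\mathscr{C}$ with $\overline{f^n(B)}\subset B'$; (iii) each $C\in\mathscr{C}$ is contained in some $A_i$. $\omega(f,y)=\bigcap_{m\ge1}\overline{\bigcup_{n\ge m}\{f^n(y)\}}$. *)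

theory Defs
  imports "HOL-Analysis.Analysis"
begin

text \<open>The ambient compact metric space X is modelled as the whole type 'a
  (assumption compact UNIV in the theorem). Open subsets of X are then open sets.\<close>

definition bi_lipschitz_le :: "real \<Rightarrow> ('a::metric_space \<Rightarrow> 'a) \<Rightarrow> bool" where
  "bi_lipschitz_le lam g \<longleftrightarrow>
     (\<forall>x y. dist (g x) (g y) \<le> lam * dist x y) \<and>
     (\<exists>c>0. \<forall>x y. c * dist x y \<le> dist (g x) (g y))"

text \<open>Strong invariance; condition (iii) refers to the pieces A_i of the
  partition witnessing that f is a piecewise contraction.\<close>
definition strongly_invariant ::
    "('a::metric_space \<Rightarrow> 'a) \<Rightarrow> nat \<Rightarrow> (nat \<Rightarrow> 'a set) \<Rightarrow> 'a set set \<Rightarrow> bool" where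
  "strongly_invariant f N A \<C> \<longleftrightarrow>
     finite \<C> \<and> disjoint \<C> \<and>
     (\<exists>n0\<ge>1.
        (\<forall>C\<in>\<C>. \<exists>C'\<in>\<C>. f ` C \<subseteq> C') \<and>
        (\<forall>B\<in>\<C>. \<forall>n\<ge>n0. \<exists>B'\<in>\<C>. closure ((f ^^ n) ` B) \<subseteq> B') \<and>
        (\<forall>C\<in>\<C>. \<exists>i<N. C \<subseteq> A i))"

definition omega_limit :: "('a::topological_space \<Rightarrow> 'a) \<Rightarrow> 'a \<Rightarrow> 'a set" where
  "omega_limit f y = (\<Inter>m\<in>{1..}. closure {(f ^^ n) y | n. n \<ge> m})"

definition periodic_orbit :: "('a \<Rightarrow> 'a) \<Rightarrow> 'a set \<Rightarrow> bool" where
  "periodic_orbit f \<gamma> \<longleftrightarrow>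
     (\<exists>p n. n \<ge> 1 \<and> (f ^^ n) p = p \<and> \<gamma> = {(f ^^ k) p | k. True})"

end

theory Submission
  imports Defs
begin


lemma funpow_mult_period:
  assumes "(f ^^ P) q = q"
  shows "(f ^^ (m * P + r)) q = (f ^^ r) q"
proof (induction m)
  case 0 then show ?case by simp
next
  case (Suc m)
  have "Suc m * P + r = (m * P + r) + P" by simp
  then have "(f ^^ (Suc m * P + r)) q = (f ^^ (m * P + r)) ((f ^^ P) q)"
    by (simp only: funpow_add o_apply)
  then show ?case using assms Suc by simp
qed

lemma pow_small:
  fixes lam d e :: real
  assumes "0 < lam" "lam < 1" "e > 0"
  shows "\<exists>N. \<forall>n\<ge>N. lam ^ n * d < e"
proof -
  have "(\<lambda>n. lam ^ n * d) \<longlonglongrightarrow> 0"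
    by (intro tendsto_mult_left_zero LIMSEQ_power_zero) (use assms in auto)
  then obtain N where "\<forall>n\<ge>N. dist (lam ^ n * d) 0 < e"
    using assms(3) unfolding lim_sequentially by blast
  then have "\<forall>n\<ge>N. lam ^ n * d < e" by (auto simp: abs_less_iff)
  then show ?thesis by blast
qed

lemma omega_asymp:
  fixes f :: "'a::metric_space \<Rightarrow> 'a"
  assumes lip: "\<And>n. dist ((f^^n) y) ((f^^n) y') \<le> lam^n * d" and lam: "0<lam" "lam<1"
  shows "omega_limit f y \<subseteq> omega_limit f y'"
proof
  fix x assume x: "x \<in> omega_limit f y"
  have "x \<in> closure {(f ^^ n) y' |n. m \<le> n}" if m: "1 \<le> m" for m
      unfolding closure_approachable
    proof (intro allI impI)
      fix e :: real assume e: "e > 0"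
      obtain N where N: "\<forall>n\<ge>N. lam ^ n * d < e/2" using pow_small[OF lam, of "e/2" d] e by auto
      have "x \<in> closure {(f ^^ n) y |n. m + N \<le> n}"
        using x m unfolding omega_limit_def by auto
      then obtain s where s: "s \<in> {(f ^^ n) y |n. m + N \<le> n}" "dist s x < e/2"
        unfolding closure_approachable using e by (meson half_gt_zero)
      then obtain n where n: "s = (f^^n) y" "m + N \<le> n" by auto
      have "lam ^ n * d < e/2" using N n by simp
      then have "dist ((f^^n) y) ((f^^n) y') < e/2" using lip[of n] by linarith
      then have "dist ((f^^n) y') x < e" using s n dist_triangle_half_l[of s x e] 
        by (metis dist_commute dist_triangle_half_r)
      moreover have "m \<le> n" using n by simp
      ultimately show "\<exists>z\<in>{(f ^^ n) y' |n. m \<le> n}. dist z x < e" by blast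
    qed
  then show "x \<in> omega_limit f y'" unfolding omega_limit_def by auto
qed

lemma omega_eq_orbit:
  fixes f :: "'a::metric_space \<Rightarrow> 'a"
  assumes P: "P \<ge> 1" and hfix: "(f^^P) q = q" and lam: "0 < lam" "lam < 1"
    and lip: "\<And>n. dist ((f^^(n+t)) y) ((f^^n) q) \<le> lam^n * d"
  shows "omega_limit f y = {(f^^k) q | k. True}"
proof -
  define Orb where "Orb = {(f^^k) q | k. True}"
  have "Orb = (\<lambda>k. (f^^k) q) ` {..<P}"
  proof (rule antisym)
    show "(\<lambda>k. (f^^k) q) ` {..<P} \<subseteq> Orb" unfolding Orb_def by auto
    show "Orb \<subseteq> (\<lambda>k. (f^^k) q) ` {..<P}" unfolding Orb_def
    proof clarify
    fix k
    have "(f^^k) q = (f^^(k mod P)) q"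
      using funpow_mult_period[OF hfix, of "k div P" "k mod P"] by simp
    moreover have "k mod P < P" using P by simp
    ultimately show "(f ^^ k) q \<in> (\<lambda>k. (f^^k) q) ` {..<P}" by auto
    qed
  qed
  then have cO: "closed Orb" by (simp add: finite_imp_closed)
  have sub: "omega_limit f y \<subseteq> Orb"
  proof
    fix x assume x: "x \<in> omega_limit f y"
    have "x \<in> closure Orb"
      unfolding closure_approachable
    proof (intro allI impI)
      fix e :: real assume e: "e > 0"
      obtain N where N: "\<forall>n\<ge>N. lam ^ n * d < e/2" using pow_small[OF lam, of "e/2" d] e by auto
      have "x \<in> closure {(f ^^ n) y |n. N + t + 1 \<le> n}"
        using x unfolding omega_limit_def by auto
      then obtain s where s: "s \<in> {(f ^^ n) y |n. N + t + 1 \<le> n}" "dist s x < e/2"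
        unfolding closure_approachable using e by (meson half_gt_zero)
      then obtain n where n: "s = (f^^n) y" "N + t + 1 \<le> n" by auto
      have "lam ^ (n-t) * d < e/2" using N n by simp
      then have "dist ((f^^((n-t)+t)) y) ((f^^(n-t)) q) < e/2" using lip[of "n-t"] by linarith
      then have "dist s ((f^^(n-t)) q) < e/2" using n by simp
      then have "dist ((f^^(n-t)) q) x < e" using s
        by (metis dist_commute dist_triangle_half_r)
      then show "\<exists>z\<in>Orb. dist z x < e" unfolding Orb_def by auto
    qed
    then show "x \<in> Orb" using cO by simp
  qed
  have sup: "Orb \<subseteq> omega_limit f y"
  proof
    fix x assume "x \<in> Orb"
    then obtain j where j: "x = (f^^j) q" unfolding Orb_def by auto
    have "x \<in> closure {(f ^^ n) y |n. m \<le> n}" if m: "1 \<le> m" for m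
        unfolding closure_approachable
      proof (intro allI impI)
        fix e :: real assume e: "e > 0"
        obtain N where N: "\<forall>n\<ge>N. lam ^ n * d < e" using pow_small[OF lam, of e d] e by auto
        define K where "K = m + N"
        have KP: "K * P \<ge> K" using P by simp
        have "dist ((f^^((K*P+j)+t)) y) ((f^^(K*P+j)) q) < e"
        proof -
          have "N \<le> K*P+j" using KP K_def by linarith
          then have "lam ^ (K*P+j) * d < e" using N by simp
          then show ?thesis using lip[of "K*P+j"] by linarith
        qed
        moreover have "(f^^(K*P+j)) q = x" using funpow_mult_period[OF hfix] j by simp
        moreover have "m \<le> K*P+j+t" using KP K_def by linarith
        ultimately show "\<exists>z\<in>{(f ^^ n) y |n. m \<le> n}. dist z x < e" by blast
      qed
    then show "x \<in> omega_limit f y" unfolding omega_limit_def by auto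
  qed
  show ?thesis using sub sup Orb_def by blast
qed

theorem lemma3p5:
  fixes f :: "'a::metric_space \<Rightarrow> 'a" and lam :: real
    and N :: nat and A :: "nat \<Rightarrow> 'a set" and \<phi> :: "nat \<Rightarrow> 'a \<Rightarrow> 'a"
    and \<C> :: "'a set set"
  assumes X_compact: "compact (UNIV :: 'a set)"
    and balls_connected: "\<And>(x::'a) r. connected (ball x r)"
    and diam_pos: "diameter (UNIV :: 'a set) > 0"
    and lam: "0 < lam" "lam < 1"
    and A_open: "\<And>i. i < N \<Longrightarrow> open (A i)"
    and A_conn: "\<And>i. i < N \<Longrightarrow> connected (A i)"
    and A_disj: "\<And>i j. i < N \<Longrightarrow> j < N \<Longrightarrow> i \<noteq> j \<Longrightarrow> A i \<inter> A j = {}"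
    and A_dense: "closure (\<Union>i<N. A i) = UNIV"
    and \<phi>_lip: "\<And>i. i < N \<Longrightarrow> bi_lipschitz_le lam (\<phi> i)"
    and f_piece: "\<And>i x. i < N \<Longrightarrow> x \<in> A i \<Longrightarrow> f x = \<phi> i x"
    and C_open: "\<And>C. C \<in> \<C> \<Longrightarrow> open C"
    and C_inv: "strongly_invariant f N A \<C>"
  shows "\<exists>\<Gamma>. finite \<Gamma> \<and> (\<forall>\<gamma>\<in>\<Gamma>. periodic_orbit f \<gamma> \<and> \<gamma> \<subseteq> \<Union>\<C>) \<and>
           (\<forall>y\<in>\<Union>\<C>. omega_limit f y \<in> \<Gamma>)"
  proof -
  have si: "finite \<C> \<and> disjoint \<C> \<and> (\<exists>n0\<ge>1. (\<forall>C\<in>\<C>. \<exists>C'\<in>\<C>. f ` C \<subseteq> C') \<and> (\<forall>B\<in>\<C>. \<forall>n\<ge>n0. \<exists>B'\<in>\<C>. closure ((f ^^ n) ` B) \<subseteq> B') \<and> (\<forall>C\<in>\<C>. \<exists>i<N. C \<subseteq> A i))"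
    using C_inv unfolding strongly_invariant_def .
  have Cfin: "finite \<C>" using si by (rule conjunct1)
  have Cdisj: "disjoint \<C>" using si by (rule conjunct1[OF conjunct2])
  obtain n0 where n0all: "n0 \<ge> 1 \<and> (\<forall>C\<in>\<C>. \<exists>C'\<in>\<C>. f ` C \<subseteq> C') \<and> (\<forall>B\<in>\<C>. \<forall>n\<ge>n0. \<exists>B'\<in>\<C>. closure ((f ^^ n) ` B) \<subseteq> B') \<and> (\<forall>C\<in>\<C>. \<exists>i<N. C \<subseteq> A i)"
    using conjunct2[OF conjunct2[OF si]] by (elim exE) (rule that)
  have n0: "n0 \<ge> 1" using n0all by (rule conjunct1)
  have inv1: "\<forall>C\<in>\<C>. \<exists>C'\<in>\<C>. f ` C \<subseteq> C'" using n0all by (rule conjunct1[OF conjunct2])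
  have inv2: "\<forall>B\<in>\<C>. \<forall>n\<ge>n0. \<exists>B'\<in>\<C>. closure ((f ^^ n) ` B) \<subseteq> B'" using n0all by (rule conjunct1[OF conjunct2[OF conjunct2]])
  have inv3: "\<forall>C\<in>\<C>. \<exists>i<N. C \<subseteq> A i" using n0all by (rule conjunct2[OF conjunct2[OF conjunct2]])
  have img: "\<forall>C\<in>\<C>. \<exists>C'\<in>\<C>. (f^^n) ` C \<subseteq> C'" for n
  proof (induction n)
    case 0 then show ?case by auto
  next
    case (Suc n)
    show ?case
    proof
      fix C assume "C \<in> \<C>"
      then obtain C' where C': "C' \<in> \<C>" "(f^^n) ` C \<subseteq> C'" using Suc by blast
      then obtain C'' where C'': "C'' \<in> \<C>" "f ` C' \<subseteq> C''" using inv1 by blast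
      have "(f^^Suc n) ` C \<subseteq> C''" using C'(2) C''(2) by force
      then show "\<exists>C'\<in>\<C>. (f^^Suc n) ` C \<subseteq> C'" using C''(1) by blast
    qed
  qed
  have lip: "dist ((f^^n) x) ((f^^n) x') \<le> lam^n * dist x x'"
    if C: "C\<in>\<C>" "x\<in>C" "x'\<in>C" for n C x x'
  proof (induction n)
    case 0 then show ?case by simp
  next
    case (Suc n)
    obtain C' where C': "C' \<in> \<C>" "(f^^n) ` C \<subseteq> C'" using img C by blast
    then obtain i where i: "i < N" "C' \<subseteq> A i" using inv3 by blast
    have a: "(f^^n) x \<in> A i" "(f^^n) x' \<in> A i" using C C' i by auto
    have "dist ((f^^Suc n) x) ((f^^Suc n) x') = dist (\<phi> i ((f^^n) x)) (\<phi> i ((f^^n) x'))"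
      using f_piece[OF i(1) a(1)] f_piece[OF i(1) a(2)] by simp
    also have "\<dots> \<le> lam * dist ((f^^n) x) ((f^^n) x')"
      using \<phi>_lip[OF i(1)] unfolding bi_lipschitz_le_def by blast
    also have "\<dots> \<le> lam * (lam^n * dist x x')"
      using Suc lam by (intro mult_left_mono) auto
    finally show ?case by simp
  qed
  have disj: "C1 = C2" if "C1 \<in> \<C>" "C2 \<in> \<C>" "z \<in> C1" "z \<in> C2" for C1 C2 z
    using that Cdisj by (meson disjnt_iff pairwiseD)
  have per: "\<exists>q. periodic_orbit f {(f^^k) q | k. True} \<and> {(f^^k) q | k. True} \<subseteq> \<Union>\<C>
      \<and> omega_limit f y = {(f^^k) q | k. True}" if y: "y \<in> \<Union>\<C>" for y
  proof -
    obtain C0 where C0: "C0 \<in> \<C>" "y \<in> C0" using y by blast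
    have ex: "\<exists>C. C\<in>\<C> \<and> (f^^n) y \<in> C" for n using img C0 by blast
    define h where "h n = (SOME C. C \<in> \<C> \<and> (f^^n) y \<in> C)" for n
    have h: "h n \<in> \<C> \<and> (f^^n) y \<in> h n" for n
      unfolding h_def by (rule someI_ex) (rule ex)
    have "range h \<subseteq> \<C>" using h by auto
    then have fr: "finite (range h)" using Cfin finite_subset by blast
    have "\<not> inj h"
    proof
      assume "inj h"
      then have "finite (UNIV :: nat set)" using fr finite_imageD by blast
      then show False by simp
    qed
    then obtain a b where ab: "a < b" "h a = h b"
      proof -
      obtain a0 b0 where "a0 \<noteq> b0" "h a0 = h b0" using \<open>\<not> inj h\<close> unfolding inj_def by blast
      then show ?thesis using that by (metis linorder_neqE_nat)
    qed
    define p where "p = b - a"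
    define D where "D = h a"
    define z where "z = (f^^a) y"
    have D: "D \<in> \<C>" "z \<in> D" using h D_def z_def by auto
    have p1: "p \<ge> 1" using ab p_def by simp
    have zp: "(f^^p) z \<in> D"
    proof -
      have "(f^^p) z = (f^^(p+a)) y" unfolding z_def by (simp add: funpow_add)
      also have "p + a = b" using ab p_def by simp
      finally show ?thesis using h[of b] ab D_def by simp
    qed
    have Dp: "(f^^p) ` D \<subseteq> D"
    proof -
      obtain D' where D': "D' \<in> \<C>" "(f^^p) ` D \<subseteq> D'" using img D by blast
      then have "(f^^p) z \<in> D'" using D by auto
      then have "D' = D" using disj[OF D'(1) D(1) _ zp] by simp
      then show ?thesis using D' by simp
    qed
    have Dk: "(f^^(k*p)) ` D \<subseteq> D" for k
    proof (induction k)
      case 0 then show ?case by simp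
    next
      case (Suc k)
      have "(f^^(Suc k * p)) x = (f^^p) ((f^^(k*p)) x)" for x
        by (simp add: funpow_add)
      then show ?case using Suc Dp by auto
    qed
    define P where "P = n0 * p"
    have "n0 * 1 \<le> n0 * p" using p1 by (rule mult_left_mono) simp
    then have P1n: "P \<ge> n0" unfolding P_def by simp
    have P1: "P \<ge> 1" "P \<ge> n0" using P1n n0 by linarith+
    define g where "g = f^^P"
    have gD: "g ` D \<subseteq> D" unfolding g_def P_def by (rule Dk)
    have "\<forall>n\<ge>n0. \<exists>B'\<in>\<C>. closure ((f ^^ n) ` D) \<subseteq> B'" using inv2 D(1) by (rule bspec)
    then have "\<exists>B'\<in>\<C>. closure ((f^^P) ` D) \<subseteq> B'" using P1(2) by simp
    then obtain B' where B': "B' \<in> \<C>" "closure (g ` D) \<subseteq> B'" unfolding g_def by blast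
    have "g z \<in> g ` D" using D(2) by (rule imageI)
    then have gzc: "g z \<in> closure (g ` D)" by (rule subsetD[OF closure_subset])
    have gzB: "g z \<in> B'" using B'(2) gzc by (rule subsetD)
    have gzD: "g z \<in> D" using gD \<open>g z \<in> g ` D\<close> by (rule subsetD)
    have "B' = D" by (rule disj[OF B'(1) D(1) gzB gzD])
    with B' have clD: "closure (g ` D) \<subseteq> D" by simp
    define S where "S = closure (g ` D)"
    have lipg: "dist (g x) (g x') \<le> lam^P * dist x x'" if "x \<in> D" "x' \<in> D" for x x'
      unfolding g_def using lip[OF D(1) that] .
    have SD: "S \<subseteq> D" using clD unfolding S_def .
    have lam0: "0 \<le> lam^P" using lam by simp
    have lipS: "dist (g x) (g x') \<le> lam^P * dist x x'" if "x \<in> S" "x' \<in> S" for x x'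
      using lipg[OF subsetD[OF SD that(1)] subsetD[OF SD that(2)]] .
    have "(lam^P)-lipschitz_on S g"
      unfolding lipschitz_on_def using lam0 lipS by simp
    then have contS: "continuous_on (closure (g ` D)) g"
      unfolding S_def by (rule lipschitz_on_continuous_on)
    have "g ` (g ` D) \<subseteq> closure (g ` D)"
      by (rule order_trans[OF image_mono[OF gD] closure_subset])
    then have gS: "g ` S \<subseteq> S" unfolding S_def by (rule image_closure_subset[OF contS closed_closure])
    have "compact (UNIV \<inter> S)" unfolding S_def by (rule compact_Int_closed[OF X_compact closed_closure])
    then have cS: "complete S" by (simp add: compact_imp_complete)
    have Sne: "S \<noteq> {}" using gzc unfolding S_def by (metis empty_iff)
    have lp1: "lam^P < 1"
    proof -
      have "lam^P \<le> lam^1" by (rule power_decreasing) (use P1 lam in auto)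
      then show ?thesis using lam by simp
    qed
    have "\<exists>!x\<in>S. g x = x"
      by (rule Banach_fix[OF cS Sne lam0 lp1 gS lipS])
    then obtain q where q: "q \<in> S" "g q = q" by metis
    have qD: "q \<in> D" using SD q(1) by (rule subsetD)
    have lipq: "dist ((f^^(n+a)) y) ((f^^n) q) \<le> lam^n * dist z q" for n
    proof -
      have "(f^^(n+a)) y = (f^^n) z" unfolding z_def by (simp add: funpow_add)
      then show ?thesis using lip[OF D(1) D(2) qD] by simp
    qed
    have om: "omega_limit f y = {(f^^k) q | k. True}"
      by (rule omega_eq_orbit[OF P1(1) _ lam lipq]) (use q g_def in simp)
    have gq: "(f^^P) q = q" using q(2) unfolding g_def .
    have po: "periodic_orbit f {(f^^k) q | k. True}"
      unfolding periodic_orbit_def by (rule exI[of _ q], rule exI[of _ P]) (use P1(1) gq in simp)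
    have "{(f^^k) q | k. True} \<subseteq> \<Union>\<C>"
    proof clarify
      fix k
      obtain C' where C': "C' \<in> \<C>" "(f^^k) ` D \<subseteq> C'" using img D by blast
      have "(f^^k) q \<in> C'" using C'(2) imageI[OF qD] by (rule subsetD)
      then show "(f^^k) q \<in> \<Union>\<C>" using C'(1) by (rule UnionI[rotated])
    qed
    then show ?thesis using om po by (intro exI[of _ q] conjI)
  qed
  have const: "omega_limit f y = omega_limit f y'" if "C\<in>\<C>" "y\<in>C" "y'\<in>C" for C y y'
  proof
    show "omega_limit f y \<subseteq> omega_limit f y'"
      by (rule omega_asymp[OF _ lam]) (rule lip[OF that])
    show "omega_limit f y' \<subseteq> omega_limit f y"
      by (rule omega_asymp[OF _ lam]) (rule lip[OF that(1) that(3) that(2)])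
  qed
  define \<Gamma> where "\<Gamma> = (\<lambda>y. omega_limit f y) ` \<Union>\<C>"
  have "\<Gamma> \<subseteq> (\<lambda>C. omega_limit f (SOME y. y \<in> C)) ` \<C>"
  proof
    fix w assume "w \<in> \<Gamma>"
    then obtain y C where yC: "C \<in> \<C>" "y \<in> C" "w = omega_limit f y" unfolding \<Gamma>_def by blast
    then have "(SOME y. y \<in> C) \<in> C" by (meson someI)
    then have "w = omega_limit f (SOME y. y \<in> C)" using const[OF yC(1) yC(2)] yC(3) by simp
    then show "w \<in> (\<lambda>C. omega_limit f (SOME y. y \<in> C)) ` \<C>" using yC(1) by blast
  qed
  then have "finite \<Gamma>" using Cfin finite_subset by blast
  moreover have "\<forall>\<gamma>\<in>\<Gamma>. periodic_orbit f \<gamma> \<and> \<gamma> \<subseteq> \<Union>\<C>"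
  proof
    fix \<gamma> assume "\<gamma> \<in> \<Gamma>"
    then obtain y where y: "y \<in> \<Union>\<C>" "\<gamma> = omega_limit f y" unfolding \<Gamma>_def by blast
    from per[OF y(1)] obtain q where "periodic_orbit f {(f^^k) q | k. True}"
      "{(f^^k) q | k. True} \<subseteq> \<Union>\<C>" "omega_limit f y = {(f^^k) q | k. True}" by blast
    then show "periodic_orbit f \<gamma> \<and> \<gamma> \<subseteq> \<Union>\<C>" using y(2) by simp
  qed
  moreover have "\<forall>y\<in>\<Union>\<C>. omega_limit f y \<in> \<Gamma>" unfolding \<Gamma>_def by blast
  ultimately show ?thesis by blast
qed

end
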